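(* If $(T,d_T)$ is an $\mathbb{R}$-tree (possibly non-separable), then $\Delta_T^{(c)}(R)\leq 2R$ for all $R\in[0,\infty)$. Consequently, for every $\varepsilon>0$, every $\mathbb{R}$-tree $(4+\varepsilon)$-Lipschitz embeds into $c_0^+(\kappa)$ for some cardinal $\kappa$.
   Context: A metric space $(T,d_T)$ is an $\mathbb{R}$-tree if (i) for any $s,t\in T$ there is a unique isometric embedding $\phi_{s,t}\colon[0,d_T(s,t)]\to T$ with $\phi_{s,t}(0)=s$ and $\phi_{s,t}(d_T(s,t))=t$; and (ii) any injective continuous map $\varphi\colon[0,1]\to T$ has the same range as $\phi_{\varphi(0),\varphi(1)}$. For a cover $\mathcal{U}$ of $T$: $\mathrm{diam}(\mathcal{U})=\sup_{U\in\mathcal{U}}\mathrm{diam}(U)$; $\mathcal{L}(\mathcal{U})=\sup\{d\in[0,\infty): \text{every } E\subseteq T \text{ with } \mathrm{diam}(E)<d \text{ is contained in some } U\in\mathcal{U}\}$; point-finite means each point lies in only finitely many members. $\Delta_T^{(c)}(R)=\inf\{\mathrm{diam}(\mathcal{U}): \mathcal{U} \text{ point-finite cover of } T,\ \mathcal{L}(\mathcal{U})\geq R\}$. For a cardinal $\kappa$, $c_0^+(\kappa)$ is the set of nonnegative real families $(x_\xi)_{\xi<\kappa}$ with $\{\xi: x_\xi>\eta\}$ finite for every $\eta>0$, with the sup metric. A $K$-Lipschitz embedding is an injective $f$ with $\mathrm{Lip}(f)\mathrm{Lip}(f^{-1})\leq K$. *)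

theory Defs
  imports "HOL-Analysis.Analysis"
begin

definition isometric_path :: "'a::metric_space \<Rightarrow> 'a \<Rightarrow> (real \<Rightarrow> 'a) \<Rightarrow> bool" where
  "isometric_path s t \<phi> \<longleftrightarrow>
     \<phi> 0 = s \<and> \<phi> (dist s t) = t \<and>
     (\<forall>a\<in>{0..dist s t}. \<forall>b\<in>{0..dist s t}. dist (\<phi> a) (\<phi> b) = \<bar>a - b\<bar>)"

definition R_tree :: "'a::metric_space itself \<Rightarrow> bool" where
  "R_tree _ \<longleftrightarrow>
     (\<forall>s t::'a. \<exists>\<phi>. isometric_path s t \<phi> \<and>
        (\<forall>\<psi>. isometric_path s t \<psi> \<longrightarrow> (\<forall>r\<in>{0..dist s t}. \<psi> r = \<phi> r))) \<and>
     (\<forall>\<psi>::real \<Rightarrow> 'a. continuous_on {0..1} \<psi> \<and> inj_on \<psi> {0..1} \<longrightarrow>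
        (\<forall>\<phi>. isometric_path (\<psi> 0) (\<psi> 1) \<phi> \<longrightarrow>
              \<psi> ` {0..1} = \<phi> ` {0..dist (\<psi> 0) (\<psi> 1)}))"

text \<open>Diameter of a set, with values in [0,\<infinity>]; diam {} = 0.\<close>
definition sdiam :: "'a::metric_space set \<Rightarrow> ennreal" where
  "sdiam E = (SUP x\<in>E. SUP y\<in>E. ennreal (dist x y))"

definition cover_diam :: "'a::metric_space set set \<Rightarrow> ennreal" where
  "cover_diam \<U> = (SUP U\<in>\<U>. sdiam U)"

definition lebesgue_num :: "'a::metric_space set set \<Rightarrow> ennreal" where
  "lebesgue_num \<U> = Sup {ennreal d | d. d \<ge> 0 \<and>
      (\<forall>E. sdiam E < ennreal d \<longrightarrow> (\<exists>U\<in>\<U>. E \<subseteq> U))}"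

definition point_finite_cover :: "'a set set \<Rightarrow> bool" where
  "point_finite_cover \<U> \<longleftrightarrow> \<Union>\<U> = UNIV \<and> (\<forall>x. finite {U\<in>\<U>. x \<in> U})"

text \<open>\<Delta>^(c)_T(R), infimum over the empty set being \<infinity>.\<close>
definition Delta_c :: "'a::metric_space itself \<Rightarrow> real \<Rightarrow> ennreal" where
  "Delta_c _ R = (INF \<U>\<in>{\<U>::'a set set. point_finite_cover \<U> \<and> lebesgue_num \<U> \<ge> ennreal R}.
                    cover_diam \<U>)"

definition c0plus :: "('i \<Rightarrow> real) set" where
  "c0plus = {x. (\<forall>i. x i \<ge> 0) \<and> (\<forall>\<eta>>0. finite {i. x i > \<eta>})}"

definition c0dist :: "('i \<Rightarrow> real) \<Rightarrow> ('i \<Rightarrow> real) \<Rightarrow> real" where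
  "c0dist x y = (SUP i. \<bar>x i - y i\<bar>)"

text \<open>K-Lipschitz embedding: injective f with Lip(f) Lip(f^{-1}) \<le> K
  (Lipschitz constants are attained, so this is the existential form).\<close>
definition lip_embedding ::
  "('a \<Rightarrow> 'a \<Rightarrow> real) \<Rightarrow> 'a set \<Rightarrow> ('b \<Rightarrow> 'b \<Rightarrow> real) \<Rightarrow> ('a \<Rightarrow> 'b) \<Rightarrow> real \<Rightarrow> bool" where
  "lip_embedding dA A dB f K \<longleftrightarrow> inj_on f A \<and>
     (\<exists>L M. 0 \<le> L \<and> 0 \<le> M \<and> L * M \<le> K \<and>
        (\<forall>x\<in>A. \<forall>y\<in>A. dB (f x) (f y) \<le> L * dA x y \<and> dA x y \<le> M * dB (f x) (f y)))"

end

theory Submission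
  imports Defs "HOL-Library.Nat_Bijection"
begin


definition gam :: "'a::metric_space \<Rightarrow> 'a \<Rightarrow> real \<Rightarrow> 'a" where
  "gam rt x = (SOME \<phi>. isometric_path rt x \<phi>)"

definition gp :: "'a::metric_space \<Rightarrow> 'a \<Rightarrow> 'a \<Rightarrow> real" where
  "gp rt x y = (dist rt x + dist rt y - dist x y) / 2"

lemma geo_exists:
  assumes T: "R_tree TYPE('a::metric_space)"
  shows "\<exists>\<phi>. isometric_path (s::'a) t \<phi>"
  using T unfolding R_tree_def by blast

lemma geo_unique:
  assumes T: "R_tree TYPE('a::metric_space)"
    and "isometric_path (s::'a) t \<phi>" "isometric_path s t \<psi>" "r \<in> {0..dist s t}"
  shows "\<phi> r = \<psi> r"
proof -
  from T obtain \<omega> where "isometric_path s t \<omega>"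
    "\<forall>\<psi>. isometric_path s t \<psi> \<longrightarrow> (\<forall>r\<in>{0..dist s t}. \<psi> r = \<omega> r)"
    unfolding R_tree_def by blast
  then show ?thesis using assms by metis
qed

lemma arc_thm:
  assumes T: "R_tree TYPE('a::metric_space)"
    and "continuous_on {0..1} (\<psi>::real \<Rightarrow> 'a)" "inj_on \<psi> {0..1}"
    "isometric_path (\<psi> 0) (\<psi> 1) \<phi>"
  shows "\<psi> ` {0..1} = \<phi> ` {0..dist (\<psi> 0) (\<psi> 1)}"
  using assms unfolding R_tree_def by blast

locale rtree =
  fixes rt :: "'a::metric_space"
  assumes T: "R_tree TYPE('a)"
begin

lemma gam_path: "isometric_path rt x (gam rt x)"
  unfolding gam_def using geo_exists[OF T] by (metis someI_ex)

lemma gam0[simp]: "gam rt x 0 = rt"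
  using gam_path unfolding isometric_path_def by blast

lemma gam_end[simp]: "gam rt x (dist rt x) = x"
  using gam_path unfolding isometric_path_def by blast

lemma gam_dist: "a \<in> {0..dist rt x} \<Longrightarrow> b \<in> {0..dist rt x} \<Longrightarrow>
   dist (gam rt x a) (gam rt x b) = \<bar>a - b\<bar>"
  using gam_path unfolding isometric_path_def by blast

lemma gam_lev: "0 \<le> a \<Longrightarrow> a \<le> dist rt x \<Longrightarrow> dist rt (gam rt x a) = a"
  using gam_dist[of 0 x a] by simp

lemma gam_to_end: "0 \<le> a \<Longrightarrow> a \<le> dist rt x \<Longrightarrow> dist (gam rt x a) x = dist rt x - a"
  using gam_dist[of a x "dist rt x"] by simp

lemma gam_cont: "continuous_on {0..dist rt x} (gam rt x)"
proof -
  have "1-lipschitz_on {0..dist rt x} (gam rt x)"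
    by (rule lipschitz_onI) (auto simp: gam_dist dist_real_def)
  then show ?thesis by (rule lipschitz_on_continuous_on)
qed

lemma gam_inj: "inj_on (gam rt x) {0..dist rt x}"
proof (rule inj_onI)
  fix a b assume "a \<in> {0..dist rt x}" "b \<in> {0..dist rt x}" "gam rt x a = gam rt x b"
  then show "a = b" using gam_dist[of a x b] by simp
qed

lemma gam_restrict:
  assumes "0 \<le> t" "t \<le> dist rt x" "0 \<le> a" "a \<le> t"
  shows "gam rt (gam rt x t) a = gam rt x a"
proof -
  let ?z = "gam rt x t"
  have lz: "dist rt ?z = t" using gam_lev assms by simp
  have "isometric_path rt ?z (gam rt x)"
    unfolding isometric_path_def lz using assms by (auto intro!: gam_dist)
  from geo_unique[OF T gam_path this] show ?thesis using assms lz by simp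
qed

lemma gp_nonneg: "0 \<le> gp rt x y"
  unfolding gp_def using dist_triangle[of rt x y] dist_triangle[of x y rt]
  by (simp add: dist_commute)

lemma gp_self: "gp rt x x = dist rt x"
  unfolding gp_def by simp

lemma gp_sym: "gp rt x y = gp rt y x"
  unfolding gp_def by (simp add: dist_commute)

lemma gp_le: "gp rt x y \<le> dist rt x"
  unfolding gp_def using dist_triangle[of rt y x] by (simp add: dist_commute)

lemma tree_key:
  "\<exists>t. 0 \<le> t \<and> t \<le> dist rt x \<and> t \<le> dist rt y \<and>
     dist x y = (dist rt x - t) + (dist rt y - t) \<and> (\<forall>a\<in>{0..t}. gam rt x a = gam rt y a)"
proof -
  let ?lx = "dist rt x" and ?ly = "dist rt y"
  define A where "A = {0..?lx} \<inter> gam rt x -` (gam rt y ` {0..?ly})"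
  have "compact (gam rt y ` {0..?ly})" by (rule compact_continuous_image[OF gam_cont compact_Icc])
  then have "closed (gam rt y ` {0..?ly})" by (rule compact_imp_closed)
  then have "closed A" unfolding A_def by (rule continuous_closed_preimage[OF gam_cont closed_atLeastAtMost])
  moreover have "0 \<in> A" unfolding A_def by (auto intro!: image_eqI[of _ _ 0])
  moreover have "bdd_above A" unfolding A_def by (auto intro!: bdd_aboveI[of _ ?lx])
  ultimately have tA: "Sup A \<in> A" using closed_contains_Sup by blast
  define t where "t = Sup A"
  have maxA: "u \<le> t" if "u \<in> A" for u unfolding t_def using that \<open>bdd_above A\<close> by (rule cSup_upper)
  have t0: "0 \<le> t" "t \<le> ?lx" using tA unfolding t_def A_def by auto
  from tA obtain t' where t': "t' \<in> {0..?ly}" "gam rt x t = gam rt y t'"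
    unfolding A_def t_def by auto
  have "t' = t" using gam_lev[of t' y] gam_lev[of t x] t' t0 by simp
  with t' have z: "gam rt x t = gam rt y t" "t \<le> ?ly" by auto
  have agree: "\<forall>a\<in>{0..t}. gam rt x a = gam rt y a"
  proof
    fix a assume a: "a \<in> {0..t}"
    have "gam rt x a = gam rt (gam rt x t) a" using gam_restrict[of t x a] t0 a by simp
    also have "\<dots> = gam rt (gam rt y t) a" using z by simp
    also have "\<dots> = gam rt y a" using gam_restrict[of t y a] t0 z a by simp
    finally show "gam rt x a = gam rt y a" .
  qed
  define z0 where "z0 = gam rt x t"
  define a where "a = ?lx - t"
  define b where "b = ?ly - t"
  define L where "L = a + b"
  have a0: "0 \<le> a" and b0: "0 \<le> b" using t0 z unfolding a_def b_def by auto
  have dxz: "dist x z0 = a" unfolding z0_def a_def using gam_to_end[of t x] t0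
    by (simp add: dist_commute)
  have dzy: "dist z0 y = b" unfolding z0_def b_def using gam_to_end[of t y] t0 z by simp
  have "dist x y = a + b"
  proof (cases "L = 0")
    case True
    then have "a = 0" "b = 0" using a0 b0 unfolding L_def by auto
    then show ?thesis using dxz dzy by simp
  next
    case False
    then have L0: "L > 0" using a0 b0 unfolding L_def by auto
    define \<psi> where "\<psi> s = (if s * L \<le> a then gam rt x (?lx - s * L) else gam rt y (t + s * L - a))" for s
    have \<psi>0: "\<psi> 0 = x" unfolding \<psi>_def using a0 by simp
    have \<psi>1: "\<psi> 1 = y"
    proof (cases "L \<le> a")
      case True
      then have "b = 0" using b0 unfolding L_def by simp
      then have "t = ?ly" unfolding b_def by simp
      have "\<psi> 1 = gam rt x t" using True \<open>b = 0\<close> unfolding \<psi>_def L_def a_def by simp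
      then show ?thesis using z \<open>t = ?ly\<close> by simp
    next
      case False
      then show ?thesis unfolding \<psi>_def L_def a_def b_def by simp
    qed
    have cont: "continuous_on {0..1} \<psi>"
      unfolding \<psi>_def
    proof (rule continuous_on_cases_le)
      show "continuous_on {s \<in> {0..1}. s * L \<le> a} (\<lambda>s. gam rt x (?lx - s * L))"
      proof (rule continuous_on_compose2[OF gam_cont])
        show "continuous_on {s \<in> {0..1}. s * L \<le> a} (\<lambda>s. ?lx - s * L)"
          by (intro continuous_intros)
        show "(\<lambda>s. ?lx - s * L) ` {s \<in> {0..1}. s * L \<le> a} \<subseteq> {0..?lx}"
          using L0 a0 t0 unfolding a_def by (auto simp: mult_nonneg_nonneg)
      qed
      show "continuous_on {s \<in> {0..1}. a \<le> s * L} (\<lambda>s. gam rt y (t + s * L - a))"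
      proof (rule continuous_on_compose2[OF gam_cont])
        show "continuous_on {s \<in> {0..1}. a \<le> s * L} (\<lambda>s. t + s * L - a)"
          by (intro continuous_intros)
        show "(\<lambda>s. t + s * L - a) ` {s \<in> {0..1}. a \<le> s * L} \<subseteq> {0..?ly}"
        proof
          fix w assume "w \<in> (\<lambda>s. t + s * L - a) ` {s \<in> {0..1}. a \<le> s * L}"
          then obtain s where s: "s \<in> {0..1}" "a \<le> s * L" "w = t + s * L - a" by auto
          have "s * L \<le> L" using s L0 by (simp add: mult_left_le_one_le)
          then show "w \<in> {0..?ly}" using s t0 unfolding L_def b_def by auto
        qed
      qed
      show "continuous_on {0..1} (\<lambda>s. s * L)" by (intro continuous_intros)
      show "\<And>s. s \<in> {0..1} \<Longrightarrow> s * L = a \<Longrightarrow> gam rt x (?lx - s * L) = gam rt y (t + s * L - a)"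
        using z unfolding a_def by simp
    qed
    have inj: "inj_on \<psi> {0..1}"
    proof (rule inj_onI)
      fix s1 s2 assume s1: "s1 \<in> {0..1}" and s2: "s2 \<in> {0..1}" and eq: "\<psi> s1 = \<psi> s2"
      have r1: "0 \<le> s1 * L" "s1 * L \<le> L" using s1 L0 by (auto simp: mult_left_le_one_le)
      have r2: "0 \<le> s2 * L" "s2 * L \<le> L" using s2 L0 by (auto simp: mult_left_le_one_le)
      have mixed: False if m1: "u * L \<le> a" and m2: "\<not> v * L \<le> a"
        and ur: "0 \<le> u * L" and vr: "v * L \<le> L"
        and e: "gam rt x (?lx - u * L) = gam rt y (t + v * L - a)" for u v
      proof -
        have inimg: "gam rt y (t + v * L - a) \<in> gam rt y ` {0..?ly}"
          using m2 vr t0 unfolding L_def b_def by auto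
        have "?lx - u * L \<in> A" unfolding A_def using inimg e m1 ur t0
          unfolding a_def by auto
        then have "?lx - u * L \<le> t" by (rule maxA)
        then have "?lx - u * L = t" using m1 unfolding a_def by simp
        then have "gam rt y (t + v * L - a) = gam rt y t" using e z by simp
        then have "dist rt (gam rt y (t + v * L - a)) = dist rt (gam rt y t)" by simp
        moreover have "dist rt (gam rt y (t + v * L - a)) = t + v * L - a"
          using m2 vr t0 unfolding L_def b_def by (intro gam_lev) auto
        moreover have "dist rt (gam rt y t) = t" using t0 z by (intro gam_lev) auto
        ultimately show False using m2 by simp
      qed
      show "s1 = s2"
      proof (cases "s1 * L \<le> a")
        case c1: True
        show ?thesis
        proof (cases "s2 * L \<le> a")
          case True
          then have "gam rt x (?lx - s1 * L) = gam rt x (?lx - s2 * L)" using eq c1 unfolding \<psi>_def by simp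
          then have "?lx - s1 * L = ?lx - s2 * L"
            using gam_inj[of x] r1 r2 c1 True t0 unfolding a_def by (auto dest: inj_onD)
          then show ?thesis using L0 by simp
        next
          case False
          then show ?thesis using mixed[of s1 s2] eq c1 r1 r2 unfolding \<psi>_def by simp
        qed
      next
        case c1: False
        show ?thesis
        proof (cases "s2 * L \<le> a")
          case True
          then show ?thesis using mixed[of s2 s1] eq c1 r1 r2 unfolding \<psi>_def by simp
        next
          case False
          then have "gam rt y (t + s1 * L - a) = gam rt y (t + s2 * L - a)" using eq c1 unfolding \<psi>_def by simp
          moreover have "t + s1 * L - a \<in> {0..?ly}" using c1 r1 t0 unfolding L_def b_def by auto
          moreover have "t + s2 * L - a \<in> {0..?ly}" using False r2 t0 unfolding L_def b_def by auto
          ultimately have "t + s1 * L - a = t + s2 * L - a"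
            using gam_inj[of y] by (auto dest: inj_onD)
          then show ?thesis using L0 by simp
        qed
      qed
    qed
    obtain \<phi> where \<phi>: "isometric_path x y \<phi>" using geo_exists[OF T] by blast
    have img: "\<psi> ` {0..1} = \<phi> ` {0..dist x y}"
      using arc_thm[OF T cont inj] \<phi> \<psi>0 \<psi>1 by simp
    have "\<psi> (a / L) = z0"
    proof -
      have "a / L * L = a" using L0 by simp
      then show ?thesis unfolding \<psi>_def z0_def a_def by simp
    qed
    moreover have "a / L \<in> {0..1}" using a0 b0 L0 unfolding L_def by auto
    ultimately have "z0 \<in> \<phi> ` {0..dist x y}" using img by blast
    then obtain u where u: "u \<in> {0..dist x y}" "z0 = \<phi> u" by auto
    have p\<phi>: "\<phi> 0 = x" "\<phi> (dist x y) = y"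
      "\<And>a b. a \<in> {0..dist x y} \<Longrightarrow> b \<in> {0..dist x y} \<Longrightarrow> dist (\<phi> a) (\<phi> b) = \<bar>a - b\<bar>"
      using \<phi> unfolding isometric_path_def by auto
    have "dist x z0 = u" using p\<phi>(1) p\<phi>(3)[of 0 u] u by simp
    moreover have "dist z0 y = dist x y - u" using p\<phi>(2) p\<phi>(3)[of u "dist x y"] u by simp
    ultimately show ?thesis using dxz dzy by simp
  qed
  then show ?thesis using t0 z agree unfolding a_def b_def by auto
qed

lemma gp_agree: "0 \<le> e \<Longrightarrow> e \<le> gp rt x y \<Longrightarrow> gam rt x e = gam rt y e"
  using tree_key[of x y] unfolding gp_def by force

lemma gp_ultra: "min (gp rt x y) (gp rt x z) \<le> gp rt y z"
proof -
  define m where "m = min (gp rt x y) (gp rt x z)"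
  have m0: "0 \<le> m" unfolding m_def using gp_nonneg by simp
  have "gam rt y m = gam rt x m" using gp_agree[of m x y] m0 unfolding m_def by simp
  moreover have "gam rt z m = gam rt x m" using gp_agree[of m x z] m0 unfolding m_def by simp
  moreover have my: "m \<le> dist rt y" using gp_le[of y x] gp_sym[of x y] unfolding m_def by simp
  moreover have mz: "m \<le> dist rt z" using gp_le[of z x] gp_sym[of x z] unfolding m_def by simp
  ultimately have "dist y z \<le> (dist rt y - m) + (dist rt z - m)"
    using dist_triangle[of y z "gam rt y m"] gam_to_end[of m y] gam_to_end[of m z] m0
    by (simp add: dist_commute)
  then show ?thesis unfolding gp_def m_def by simp
qed

end



context rtree begin

definition Vs :: "real \<Rightarrow> real \<Rightarrow> real \<Rightarrow> 'a \<Rightarrow> 'a set" where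
  "Vs g R e p = {z. e \<le> dist rt z \<and> dist rt z < e + R + g \<and> gam rt z e = p}"

lemma Vs_diam:
  assumes "z \<in> Vs g R e p" "w \<in> Vs g R e p" "0 \<le> e"
  shows "dist z w < 2 * (R + g)"
proof -
  have z: "e \<le> dist rt z" "dist rt z < e + R + g" "gam rt z e = p" using assms(1) unfolding Vs_def by auto
  have w: "e \<le> dist rt w" "dist rt w < e + R + g" "gam rt w e = p" using assms(2) unfolding Vs_def by auto
  have "dist p z = dist rt z - e" using gam_to_end[of e z] z assms(3) by simp
  moreover have "dist p w = dist rt w - e" using gam_to_end[of e w] w assms(3) by simp
  moreover have "dist z w \<le> dist p z + dist p w" by (rule dist_triangle3)
  ultimately show ?thesis using z w by simp
qed

lemma leb:
  assumes g: "g > 0" and E: "x0 \<in> E" and dE: "\<forall>z\<in>E. \<forall>w\<in>E. dist z w \<le> r" and rR: "r < R"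
  shows "\<exists>n::nat. E \<subseteq> Vs g R (real n * g) (gam rt x0 (real n * g)) \<and>
     (\<forall>\<beta>. (\<forall>z\<in>E. \<forall>w\<in>E. \<beta> \<le> gp rt z w) \<longrightarrow> \<beta> < real n * g + g)"
proof -
  define P where "P = {gp rt z w | z w. z \<in> E \<and> w \<in> E}"
  have Pne: "P \<noteq> {}" using E unfolding P_def by auto
  have Pbdd: "bdd_below P" unfolding P_def using gp_nonneg by (auto intro!: bdd_belowI[of _ 0])
  define b where "b = Inf P"
  have bl: "b \<le> gp rt z w" if "z \<in> E" "w \<in> E" for z w
  proof -
    have "gp rt z w \<in> P" unfolding P_def using that by auto
    then show ?thesis unfolding b_def using Pbdd by (rule cInf_lower)
  qed
  have bg: "\<beta> \<le> b" if "\<forall>z\<in>E. \<forall>w\<in>E. \<beta> \<le> gp rt z w" for \<beta>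
    unfolding b_def using Pne by (rule cInf_greatest) (use that in \<open>auto simp: P_def\<close>)
  have b0: "0 \<le> b" using bg[of 0] gp_nonneg by auto
  have close: "\<exists>z w. z \<in> E \<and> w \<in> E \<and> gp rt z w < b + \<eta>" if "\<eta> > 0" for \<eta>
  proof -
    have "Inf P < b + \<eta>" using that unfolding b_def by simp
    then obtain q where "q \<in> P" "q < b + \<eta>" using cInf_less_iff[OF Pne Pbdd] by blast
    then show ?thesis unfolding P_def by auto
  qed
  have lev: "dist rt z \<le> b + r" if zE: "z \<in> E" for z
  proof (rule ccontr)
    assume "\<not> dist rt z \<le> b + r"
    define \<eta> where "\<eta> = (dist rt z - b - r) / 2"
    have "\<eta> > 0" using \<open>\<not> dist rt z \<le> b + r\<close> unfolding \<eta>_def by simp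
    then obtain w v where wv: "w \<in> E" "v \<in> E" "gp rt w v < b + \<eta>" using close by blast
    have "min (gp rt z w) (gp rt z v) \<le> gp rt w v" by (rule gp_ultra)
    then obtain u where u: "u \<in> E" "gp rt z u < b + \<eta>" using wv by (metis min_def not_le order_le_less_trans)
    have "b \<le> dist rt u" using bl[of u u] u gp_self by simp
    moreover have "dist z u \<le> r" using dE zE u by blast
    moreover have "dist rt z + dist rt u - dist z u < b + dist rt z - r"
      using u(2) unfolding gp_def \<eta>_def by (simp add: field_simps)
    ultimately show False by linarith
  qed
  define n where "n = nat (floor (b / g))"
  have rn: "real n = of_int (floor (b / g))" unfolding n_def using b0 g by simp
  have n1: "real n * g \<le> b"
  proof -
    have "real n \<le> b / g" using rn by linarith
    then show ?thesis using g by (simp add: pos_le_divide_eq)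
  qed
  have n2: "b < real n * g + g"
  proof -
    have "b / g < real n + 1" using rn by linarith
    then have "b < (real n + 1) * g" using g by (simp add: pos_divide_less_eq)
    then show ?thesis by (simp add: algebra_simps)
  qed
  have ng0: "0 \<le> real n * g" using g by simp
  have "E \<subseteq> Vs g R (real n * g) (gam rt x0 (real n * g))"
  proof
    fix z assume zE: "z \<in> E"
    have "b \<le> dist rt z" using bl[OF zE zE] gp_self by simp
    moreover have "dist rt z \<le> b + r" using lev zE by simp
    moreover have "gam rt z (real n * g) = gam rt x0 (real n * g)"
      using gp_agree[OF ng0] bl[OF zE E] n1 by simp
    ultimately show "z \<in> Vs g R (real n * g) (gam rt x0 (real n * g))"
      unfolding Vs_def using n1 n2 rR by simp
  qed
  moreover have "\<forall>\<beta>. (\<forall>z\<in>E. \<forall>w\<in>E. \<beta> \<le> gp rt z w) \<longrightarrow> \<beta> < real n * g + g"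
    using bg n2 by force
  ultimately show ?thesis by blast
qed

lemma part1:
  assumes R0: "R \<ge> 0"
  shows "Delta_c TYPE('a) R \<le> ennreal (2 * R)"
proof (rule ennreal_le_epsilon)
  fix e :: real assume e: "0 < e"
  define g where "g = e / 2"
  have g: "g > 0" using e unfolding g_def by simp
  define U where "U = (\<lambda>(n::nat, p). Vs g R (real n * g) p) ` UNIV"
  have memU: "Vs g R (real n * g) p \<in> U" for n p unfolding U_def by (auto intro!: image_eqI[of _ _ "(n, p)"])
  have pf: "point_finite_cover U"
    unfolding point_finite_cover_def
  proof
    show "\<Union>U = UNIV"
    proof (rule set_eqI, rule iffI)
      fix z :: 'a
      define n where "n = nat (floor (dist rt z / g))"
      have rn: "real n = of_int (floor (dist rt z / g))" unfolding n_def using g by simp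
      have "real n * g \<le> dist rt z"
      proof -
        have "real n \<le> dist rt z / g" using rn by linarith
        then show ?thesis using g by (simp add: pos_le_divide_eq)
      qed
      moreover have "dist rt z < real n * g + g"
      proof -
        have "dist rt z / g < real n + 1" using rn by linarith
        then have "dist rt z < (real n + 1) * g" using g by (simp add: pos_divide_less_eq)
        then show ?thesis by (simp add: algebra_simps)
      qed
      ultimately have "z \<in> Vs g R (real n * g) (gam rt z (real n * g))"
        unfolding Vs_def using R0 by simp
      then show "z \<in> \<Union>U" using memU by blast
    qed simp
    show "\<forall>z. finite {V \<in> U. z \<in> V}"
    proof
      fix z :: 'a
      have "{V \<in> U. z \<in> V} \<subseteq>
          (\<lambda>n. Vs g R (real n * g) (gam rt z (real n * g))) ` {..nat (floor (dist rt z / g))}"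
      proof
        fix V assume V: "V \<in> {V \<in> U. z \<in> V}"
        then obtain n p where Vd: "V = Vs g R (real n * g) p" unfolding U_def by auto
        with V have zin: "real n * g \<le> dist rt z" "gam rt z (real n * g) = p" unfolding Vs_def by auto
        have "real n \<le> dist rt z / g" using zin(1) g by (simp add: pos_le_divide_eq)
        then have "n \<le> nat (floor (dist rt z / g))" by (rule le_nat_floor)
        then show "V \<in> (\<lambda>n. Vs g R (real n * g) (gam rt z (real n * g))) ` {..nat (floor (dist rt z / g))}"
          using Vd zin by auto
      qed
      then show "finite {V \<in> U. z \<in> V}" by (rule finite_subset) simp
    qed
  qed
  have lb: "ennreal R \<le> lebesgue_num U"
    unfolding lebesgue_num_def
  proof (rule Sup_upper, simp, intro exI conjI allI impI)
    show "ennreal R = ennreal R" ..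
    show "0 \<le> R" by (rule R0)
    fix E :: "'a set" assume dE: "sdiam E < ennreal R"
    show "\<exists>V\<in>U. E \<subseteq> V"
    proof (cases "E = {}")
      case True
      then show ?thesis using memU by blast
    next
      case False
      then obtain x0 where x0: "x0 \<in> E" by blast
      define r where "r = enn2real (sdiam E)"
      have "sdiam E < top" using dE by (metis ennreal_less_top order.strict_trans)
      then have sr: "sdiam E = ennreal r" unfolding r_def by simp
      have r0: "0 \<le> r" unfolding r_def by simp
      have "\<forall>z\<in>E. \<forall>w\<in>E. dist z w \<le> r"
      proof (intro ballI)
        fix z w assume zE: "z \<in> E" and wE: "w \<in> E"
        have "ennreal (dist z w) \<le> (SUP y\<in>E. ennreal (dist z y))" by (rule SUP_upper[OF wE])
        also have "\<dots> \<le> sdiam E" unfolding sdiam_def by (rule SUP_upper[OF zE])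
        finally have "ennreal (dist z w) \<le> sdiam E" .
        then show "dist z w \<le> r" using sr r0 by simp
      qed
      moreover have "r < R" using dE sr r0 by (simp add: ennreal_less_iff)
      ultimately obtain n where "E \<subseteq> Vs g R (real n * g) (gam rt x0 (real n * g))"
        using leb[OF g x0] by blast
      then show ?thesis using memU by blast
    qed
  qed
  have cd: "cover_diam U \<le> ennreal (2 * R + e)"
    unfolding cover_diam_def
  proof (rule SUP_least)
    fix V assume "V \<in> U"
    then obtain n p where Vd: "V = Vs g R (real n * g) p" unfolding U_def by auto
    show "sdiam V \<le> ennreal (2 * R + e)" unfolding sdiam_def
    proof (intro SUP_least)
      fix z w assume "z \<in> V" "w \<in> V"
      then have "dist z w < 2 * (R + g)" using Vs_diam Vd g by simp
      then show "ennreal (dist z w) \<le> ennreal (2 * R + e)" unfolding g_def by (simp add: ennreal_leI)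
    qed
  qed
  have "Delta_c TYPE('a) R \<le> cover_diam U"
    unfolding Delta_c_def by (rule INF_lower) (use pf lb in auto)
  also have "\<dots> \<le> ennreal (2 * R + e)" by (rule cd)
  also have "\<dots> = ennreal (2 * R) + ennreal e" using R0 e by simp
  finally show "Delta_c TYPE('a) R \<le> ennreal (2 * R) + ennreal e" .
qed

end



definition sc :: "real \<Rightarrow> int \<Rightarrow> real" where
  "sc c k = (1 + c) powr (real_of_int k)"

lemma sc_pos: "0 < c \<Longrightarrow> 0 < sc c k"
  unfolding sc_def by simp

context rtree begin

definition coord :: "real \<Rightarrow> int \<Rightarrow> nat \<Rightarrow> 'a \<Rightarrow> 'a \<Rightarrow> real" where
  "coord c k m p x = (if m = 0 then 0 else
     infdist x (- Vs (c * sc c k) (sc c k) (real m * (c * sc c k)) p))"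

definition Femb :: "real \<Rightarrow> 'a \<Rightarrow> nat \<times> 'a \<Rightarrow> real" where
  "Femb c x = (\<lambda>(n, p). coord c (int_decode (fst (prod_decode n))) (snd (prod_decode n)) p x)"

lemma coord_nonneg: "0 \<le> coord c k m p x"
  unfolding coord_def by (simp add: infdist_nonneg)

lemma coord_lip: "\<bar>coord c k m p x - coord c k m p y\<bar> \<le> dist x y"
  unfolding coord_def by (simp add: infdist_triangle_abs)

lemma Femb_nonneg: "0 \<le> Femb c x i"
  unfolding Femb_def by (cases i) (simp add: coord_nonneg)

lemma Femb_lip: "\<bar>Femb c x i - Femb c y i\<bar> \<le> dist x y"
  unfolding Femb_def by (cases i) (simp add: coord_lip)

lemma coord_pos:
  assumes c: "0 < c" and pos: "0 < coord c k m p x"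
  shows "m \<noteq> 0 \<and> real m * (c * sc c k) \<le> dist rt x \<and> p = gam rt x (real m * (c * sc c k))
     \<and> coord c k m p x < (1 + 2 * c) * sc c k"
proof -
  let ?R = "sc c k" let ?g = "c * sc c k"
  let ?V = "Vs ?g ?R (real m * ?g) p"
  have m: "m \<noteq> 0" using pos unfolding coord_def by (auto split: if_splits)
  have cd: "coord c k m p x = infdist x (- ?V)" using m unfolding coord_def by simp
  have xV: "x \<in> ?V"
  proof (rule ccontr)
    assume "x \<notin> ?V" then have "infdist x (- ?V) = 0" by simp
    then show False using pos cd by simp
  qed
  then have xl: "real m * ?g \<le> dist rt x" "dist rt x < real m * ?g + ?R + ?g"
     "p = gam rt x (real m * ?g)" unfolding Vs_def by auto
  have R0: "0 < ?R" using sc_pos c by simp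
  define e' where "e' = (real m - 1) * ?g"
  have e'0: "0 \<le> e'" unfolding e'_def using m c R0 by simp
  have cR0: "0 \<le> c * ?R" using c R0 by simp
  have e'l: "e' \<le> dist rt x" using xl(1) cR0 unfolding e'_def by (simp add: algebra_simps)
  have "gam rt x e' \<notin> ?V"
  proof
    assume "gam rt x e' \<in> ?V"
    then have "real m * ?g \<le> dist rt (gam rt x e')" unfolding Vs_def by auto
    moreover have "0 < c * ?R" using c R0 by simp
    ultimately show False using gam_lev[OF e'0 e'l] unfolding e'_def by (simp add: algebra_simps)
  qed
  then have "infdist x (- ?V) \<le> dist x (gam rt x e')" by (intro infdist_le) simp
  also have "\<dots> = dist rt x - e'" using gam_to_end[OF e'0 e'l] by (simp add: dist_commute)
  also have "\<dots> < (1 + 2 * c) * ?R" using xl(2) unfolding e'_def by (simp add: algebra_simps)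
  finally show ?thesis using m xl cd by simp
qed

lemma Femb_finite:
  assumes c: "0 < c" and eta: "0 < \<eta>"
  shows "finite {i. \<eta> < Femb c x i}"
proof -
  let ?l = "dist rt x" let ?b = "1 + c"
  have b1: "1 < ?b" using c by simp
  define k0 where "k0 = floor (log ?b (\<eta> / (1 + 2 * c)))"
  define k1 where "k1 = floor (log ?b (?l / c))"
  define N where "N = nat (floor (?l / (c * sc c k0)))"
  have "{i. \<eta> < Femb c x i} \<subseteq>
     (\<lambda>(k, m). (prod_encode (int_encode k, m), gam rt x (real m * (c * sc c k)))) ` ({k0..k1} \<times> {..N})"
  proof
    fix i assume "i \<in> {i. \<eta> < Femb c x i}"
    then obtain n p where i: "i = (n, p)" and ip: "\<eta> < Femb c x (n, p)" by (cases i) auto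
    define k where "k = int_decode (fst (prod_decode n))"
    define m where "m = snd (prod_decode n)"
    have F: "Femb c x (n, p) = coord c k m p x" unfolding Femb_def k_def m_def by simp
    have pos: "0 < coord c k m p x" using ip F eta by simp
    note cp = coord_pos[OF c pos]
    have R0: "0 < sc c k" using sc_pos c by simp
    have "\<eta> < coord c k m p x" using ip F by simp
    then have "\<eta> < (1 + 2 * c) * sc c k" using cp by linarith
    then have "\<eta> / (1 + 2 * c) < sc c k" using c by (simp add: pos_divide_less_eq mult.commute)
    then have "log ?b (\<eta> / (1 + 2 * c)) < real_of_int k" unfolding sc_def
      using log_less_iff[OF b1] eta c by simp
    then have kk0: "k0 \<le> k" unfolding k0_def by linarith
    have "c * sc c k \<le> ?l"
    proof -
      have "1 * (c * sc c k) \<le> real m * (c * sc c k)" using cp c R0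
        by (intro mult_right_mono) auto
      then show ?thesis using cp by simp
    qed
    then have le: "sc c k \<le> ?l / c" using c by (simp add: pos_le_divide_eq mult.commute)
    have lpos: "0 < ?l / c" using le R0 by linarith
    have "real_of_int k \<le> log ?b (?l / c)" using le_log_iff[OF b1 lpos] le unfolding sc_def by simp
    then have kk1: "k \<le> k1" unfolding k1_def by linarith
    have sk: "sc c k0 \<le> sc c k" unfolding sc_def using kk0 b1 by (intro powr_mono) auto
    have R00: "0 < sc c k0" using sc_pos c by simp
    have "real m * (c * sc c k0) \<le> real m * (c * sc c k)" using sk c by (intro mult_left_mono) auto
    then have "real m * (c * sc c k0) \<le> ?l" using cp by linarith
    then have "real m \<le> ?l / (c * sc c k0)" using c R00 by (simp add: pos_le_divide_eq)
    then have mN: "m \<le> N" unfolding N_def by (rule le_nat_floor)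
    have "n = prod_encode (int_encode k, m)" unfolding k_def m_def by simp
    then show "i \<in> (\<lambda>(k, m). (prod_encode (int_encode k, m), gam rt x (real m * (c * sc c k)))) ` ({k0..k1} \<times> {..N})"
      using i kk0 kk1 mN cp by (auto intro!: image_eqI[of _ _ "(k, m)"])
  qed
  then show ?thesis by (rule finite_subset) simp
qed

lemma Femb_lower:
  assumes c: "0 < c" "c < 1" and ly: "dist rt y \<le> dist rt x" and xy: "x \<noteq> y"
  shows "\<exists>i. dist x y \<le> 4 * (1 + c)^2 / (1 - c) * \<bar>Femb c x i - Femb c y i\<bar>"
proof -
  let ?b = "1 + c"
  define D where "D = dist x y"
  have D0: "0 < D" using xy unfolding D_def by simp
  have b1: "1 < ?b" using c by simp
  define t where "t = log ?b (D / (2 * ?b))"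
  define k where "k = floor t"
  define R where "R = sc c k"
  have R0: "0 < R" unfolding R_def using sc_pos c by simp
  have "R \<le> ?b powr t" unfolding R_def sc_def k_def using b1 by (intro powr_mono) auto
  also have "?b powr t = D / (2 * ?b)" unfolding t_def using D0 c by simp
  finally have RD: "2 * ?b * R \<le> D" using c by (simp add: le_divide_eq mult.commute)
  have "?b powr t < ?b powr (real_of_int k + 1)" unfolding k_def using b1 by (intro powr_less_mono) auto
  also have "\<dots> = ?b * R" unfolding R_def sc_def powr_add using c by simp
  finally have "D / (2 * ?b) < ?b * R" using \<open>?b powr t = D / (2 * ?b)\<close> by simp
  then have "D < (?b * R) * (2 * ?b)" using pos_divide_less_eq[of "2 * ?b" D "?b * R"] c by simp
  then have DR: "D < 2 * ?b * (?b * R)" by (simp add: mult_ac)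
  define g where "g = c * R"
  have g0: "0 < g" unfolding g_def using c R0 by simp
  define r where "r = (1 - c) * R / 2"
  have r0: "0 < r" unfolding r_def using c R0 by simp
  have lx: "?b * R \<le> dist rt x"
  proof -
    have "D \<le> dist rt x + dist rt y" unfolding D_def using dist_triangle3[of x y rt] by simp
    moreover have "2 * ?b * R = 2 * (?b * R)" by simp
    ultimately show ?thesis using RD ly by linarith
  qed
  have dball: "\<forall>z\<in>ball x r. \<forall>w\<in>ball x r. dist z w \<le> (1 - c) * R"
  proof (intro ballI)
    fix z w assume "z \<in> ball x r" "w \<in> ball x r"
    then have "dist x z < r" "dist x w < r" by auto
    then show "dist z w \<le> (1 - c) * R" using dist_triangle3[of z w x] unfolding r_def by simp
  qed
  have xb: "x \<in> ball x r" using r0 by simp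
  have cRR: "(1 - c) * R < R" using c R0 by simp
  obtain m where mE: "ball x r \<subseteq> Vs g R (real m * g) (gam rt x (real m * g))"
    and mb: "\<forall>\<beta>. (\<forall>z\<in>ball x r. \<forall>w\<in>ball x r. \<beta> \<le> gp rt z w) \<longrightarrow> \<beta> < real m * g + g"
    using leb[OF g0 xb dball cRR] by blast
  have "\<forall>z\<in>ball x r. \<forall>w\<in>ball x r. dist rt x - 2 * r \<le> gp rt z w"
  proof (intro ballI)
    fix z w assume "z \<in> ball x r" "w \<in> ball x r"
    then have a: "dist x z < r" "dist x w < r" by auto
    have "dist rt x \<le> dist rt z + dist x z" using dist_triangle3[of rt x z] by (simp add: dist_commute)
    moreover have "dist rt x \<le> dist rt w + dist x w" using dist_triangle3[of rt x w] by (simp add: dist_commute)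
    moreover have "dist z w \<le> dist x z + dist x w" using dist_triangle3[of z w x] by simp
    ultimately have "2 * dist rt x - 4 * r \<le> dist rt z + dist rt w - dist z w" using a by linarith
    then show "dist rt x - 2 * r \<le> gp rt z w" unfolding gp_def by simp
  qed
  with mb have "dist rt x - 2 * r < real m * g + g" by blast
  moreover have "2 * r = R - c * R" unfolding r_def by (simp add: field_simps)
  moreover have "R + c * R \<le> dist rt x" using lx by (simp add: algebra_simps)
  moreover have "g = c * R" unfolding g_def ..
  ultimately have "2 * g < real m * g + g" by linarith
  then have "0 < (real m - 1) * g" by (simp add: algebra_simps)
  then have "1 < real m" using g0 by (simp add: zero_less_mult_iff)
  then have m0: "m \<noteq> 0" by auto
  define p where "p = gam rt x (real m * g)"
  define V where "V = Vs g R (real m * g) p"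
  have cdef: "coord c k m p z = infdist z (- V)" for z
    unfolding coord_def V_def g_def R_def using m0 by simp
  have "0 < real m * g" using m0 g0 by simp
  then have "rt \<notin> V" unfolding V_def Vs_def by simp
  then have Vne: "- V \<noteq> {}" by blast
  have "r \<le> infdist x (- V)"
    unfolding infdist_notempty[OF Vne]
  proof (rule cINF_greatest[OF Vne])
    fix a assume "a \<in> - V"
    then have "a \<notin> ball x r" using mE unfolding V_def p_def by blast
    then show "r \<le> dist x a" by simp
  qed
  moreover have "infdist y (- V) = 0"
  proof -
    have "y \<notin> V"
    proof
      assume "y \<in> V"
      moreover have "x \<in> V" using mE xb unfolding V_def p_def by blast
      ultimately have "dist x y < 2 * (R + g)" unfolding V_def using Vs_diam g0 by simp
      then show False using RD unfolding D_def g_def by (simp add: algebra_simps)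
    qed
    then show ?thesis by simp
  qed
  ultimately have "r \<le> \<bar>coord c k m p x - coord c k m p y\<bar>" unfolding cdef by simp
  moreover have "Femb c x (prod_encode (int_encode k, m), p) = coord c k m p x" for x
    unfolding Femb_def by simp
  ultimately have ri: "r \<le> \<bar>Femb c x (prod_encode (int_encode k, m), p) - Femb c y (prod_encode (int_encode k, m), p)\<bar>"
    by simp
  have e: "4 * ?b^2 / (1 - c) * r = 2 * ?b * (?b * R)"
    unfolding r_def using c by (simp add: field_simps power2_eq_square)
  have "D \<le> 4 * ?b^2 / (1 - c) * r" using DR unfolding e by linarith
  also have "\<dots> \<le> 4 * ?b^2 / (1 - c) * \<bar>Femb c x (prod_encode (int_encode k, m), p) - Femb c y (prod_encode (int_encode k, m), p)\<bar>"
    using ri c by (intro mult_left_mono) auto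
  finally show ?thesis unfolding D_def by blast
qed

end



theorem proposition4p4:
  assumes "R_tree TYPE('a::metric_space)"
  shows "(\<forall>R::real. R \<ge> 0 \<longrightarrow> Delta_c TYPE('a) R \<le> ennreal (2 * R)) \<and>
         (\<forall>\<epsilon>>0. \<exists>f :: 'a \<Rightarrow> (nat \<times> 'a \<Rightarrow> real).
             f ` UNIV \<subseteq> c0plus \<and> lip_embedding dist UNIV c0dist f (4 + \<epsilon>))"
proof -
  interpret rtree "undefined :: 'a" using assms by (simp add: rtree_def)
  have A: "\<forall>R::real. R \<ge> 0 \<longrightarrow> Delta_c TYPE('a) R \<le> ennreal (2 * R)" using part1 by blast
  have B: "\<forall>\<epsilon>>0. \<exists>f :: 'a \<Rightarrow> (nat \<times> 'a \<Rightarrow> real).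
             f ` UNIV \<subseteq> c0plus \<and> lip_embedding dist UNIV c0dist f (4 + \<epsilon>)"
  proof (intro allI impI)
    fix \<epsilon> :: real assume \<epsilon>: "\<epsilon> > 0"
    define c where "c = \<epsilon> / (\<epsilon> + 16)"
    have c0: "0 < c" unfolding c_def using \<epsilon> by simp
    have c1: "c < 1" unfolding c_def using \<epsilon> by simp
    define f where "f = Femb c"
    have bd: "bdd_above (range (\<lambda>i. \<bar>f x i - f y i\<bar>))" for x y
      by (rule bdd_aboveI2[where M = "dist x y"]) (simp add: f_def Femb_lip)
    have up: "c0dist (f x) (f y) \<le> dist x y" for x y
      unfolding c0dist_def by (rule cSUP_least) (auto simp: f_def Femb_lip)
    have ge: "\<bar>f x i - f y i\<bar> \<le> c0dist (f x) (f y)" for x y i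
      unfolding c0dist_def by (rule cSUP_upper[OF UNIV_I bd])
    have c0nn: "0 \<le> c0dist (f x) (f y)" for x y
      using ge[where x=x and y=y and i=undefined] by linarith
    have ne: "\<epsilon> + 16 \<noteq> 0" "\<epsilon> + 16 > 0" using \<epsilon> by auto
    have h: "\<epsilon> * (1 - c) = 16 * c" unfolding c_def using ne by (simp add: field_simps)
    have e1: "(4 + \<epsilon>) * (1 - c) = 4 - 4 * c + \<epsilon> * (1 - c)" by (simp add: algebra_simps)
    have e2: "4 * (1 + c)^2 = 4 + 8 * c + 4 * (c * c)" by (simp add: power2_eq_square algebra_simps)
    have cc: "c * c \<le> c" using c0 c1 by (simp add: mult_left_le_one_le)
    have "4 * (1 + c)^2 \<le> (4 + \<epsilon>) * (1 - c)" using h e1 e2 cc by linarith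
    then have K: "4 * (1 + c)^2 / (1 - c) \<le> 4 + \<epsilon>" using c1 by (simp add: pos_divide_le_eq)
    have low: "dist x y \<le> (4 + \<epsilon>) * c0dist (f x) (f y)" for x y
    proof (cases "x = y")
      case True
      then show ?thesis using c0nn[of x y] \<epsilon> by simp
    next
      case False
      have "\<exists>i. dist x y \<le> 4 * (1 + c)^2 / (1 - c) * \<bar>f x i - f y i\<bar>"
      proof (cases "dist undefined y \<le> dist undefined x")
        case True
        then show ?thesis using Femb_lower[OF c0 c1 True False] unfolding f_def by blast
      next
        case F: False
        then have "dist undefined x \<le> dist undefined y" by simp
        from Femb_lower[OF c0 c1 this] False obtain i where
          "dist y x \<le> 4 * (1 + c)^2 / (1 - c) * \<bar>Femb c y i - Femb c x i\<bar>" by metis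
        then show ?thesis unfolding f_def by (metis abs_minus_commute dist_commute)
      qed
      then obtain i where i: "dist x y \<le> 4 * (1 + c)^2 / (1 - c) * \<bar>f x i - f y i\<bar>" by blast
      have Kp: "0 \<le> 4 * (1 + c)^2 / (1 - c)" using c1 by simp
      have "4 * (1 + c)^2 / (1 - c) * \<bar>f x i - f y i\<bar> \<le> 4 * (1 + c)^2 / (1 - c) * c0dist (f x) (f y)"
        by (rule mult_left_mono[OF ge[where x=x and y=y and i=i] Kp])
      also have "\<dots> \<le> (4 + \<epsilon>) * c0dist (f x) (f y)"
        using K c0nn by (rule mult_right_mono)
      finally show ?thesis using i by linarith
    qed
    have sub: "f ` UNIV \<subseteq> c0plus"
    proof
      fix v assume "v \<in> f ` UNIV"
      then obtain x where v: "v = f x" by auto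
      show "v \<in> c0plus" unfolding c0plus_def v f_def
        using Femb_nonneg Femb_finite[OF c0] by auto
    qed
    have "lip_embedding dist UNIV c0dist f (4 + \<epsilon>)"
      unfolding lip_embedding_def
    proof (intro conjI)
      show "inj_on f UNIV"
      proof (rule inj_onI)
        fix x y assume "f x = f y"
        then have "c0dist (f x) (f y) = 0" unfolding c0dist_def by simp
        then show "x = y" using low[of x y] by simp
      qed
      show "\<exists>L M. 0 \<le> L \<and> 0 \<le> M \<and> L * M \<le> 4 + \<epsilon> \<and>
        (\<forall>x\<in>UNIV. \<forall>y\<in>UNIV. c0dist (f x) (f y) \<le> L * dist x y \<and> dist x y \<le> M * c0dist (f x) (f y))"
        using up low \<epsilon> by (intro exI[of _ 1] exI[of _ "4 + \<epsilon>"]) auto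
    qed
    with sub show "\<exists>f :: 'a \<Rightarrow> (nat \<times> 'a \<Rightarrow> real).
             f ` UNIV \<subseteq> c0plus \<and> lip_embedding dist UNIV c0dist f (4 + \<epsilon>)" by blast
  qed
  from A B show ?thesis by blast
qed


end
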